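(* For integers $k\ge2$ and real $u\ge k$, $$F_k(u)=\sum_{j=0}^{k-1}(-1)^{k-j-1}\,P_{k-j}(u-j)\,F_j(u).$$
   Context: The functions $P_k$ are defined by $P_0(u)=1$ for $u\ge 0$, and for integers $k\ge1$, $P_k:[k,\infty)\to\mathbb{R}$ is the function with $P_k(k)=0$ and $uP_k'(u)=P_{k-1}(u-1)$ for $u\ge k$. The functions $F_k$ are defined by $F_0(u)=1$ for $u\ge0$, and for integers $k\ge1$, $F_k:[k,\infty)\to\mathbb{R}$ is the function with $F_k(k)=0$ and $(u-k+1)F_k'(u)=F_{k-1}(u)$ for $u\ge k$. *)

theory Defs
  imports "HOL-Analysis.Analysis"
begin

text \<open>P_0 = 1; for k \<ge> 1, P_k is the solution on [k,\<infinity>) of P_k(k) = 0,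
  u P_k'(u) = P_{k-1}(u-1), i.e. P_k(u) = integral over [k,u] of P_{k-1}(t-1)/t.
  Values for u < k are irrelevant (the integral over an empty interval gives 0).\<close>
primrec P :: "nat \<Rightarrow> real \<Rightarrow> real" where
  "P 0 u = 1"
| "P (Suc k) u = integral {real (Suc k)..u} (\<lambda>t. P k (t - 1) / t)"

text \<open>F_0 = 1; for k \<ge> 1, F_k is the solution on [k,\<infinity>) of F_k(k) = 0,
  (u-k+1) F_k'(u) = F_{k-1}(u), i.e. F_k(u) = integral over [k,u] of F_{k-1}(t)/(t-k+1).\<close>
primrec F :: "nat \<Rightarrow> real \<Rightarrow> real" where
  "F 0 u = 1"
| "F (Suc k) u = integral {real (Suc k)..u} (\<lambda>t. F k t / (t - real (Suc k) + 1))"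

end

theory Submission
  imports Defs
begin

lemma P_cont: "continuous_on {real m..B} (P m)"
proof (induction m arbitrary: B)
  case 0 then show ?case by (simp add: continuous_on_const)
next
  case (Suc m)
  have c: "continuous_on {real (Suc m)..B} (\<lambda>t. P m (t - 1) / t)"
  proof (intro continuous_intros)
    have "continuous_on {real m..B-1} (P m)" by (rule Suc.IH)
    then show "continuous_on {real (Suc m)..B} (\<lambda>t. P m (t-1))"
      by (rule continuous_on_compose2) (auto intro: continuous_intros)
    show "\<forall>x\<in>{real (Suc m)..B}. x \<noteq> 0" by auto
  qed
  have "continuous_on {real (Suc m)..B} (\<lambda>u. integral {real (Suc m)..u} (\<lambda>t. P m (t - 1) / t))"
    by (rule indefinite_integral_continuous_1[OF integrable_continuous_interval[OF c]])
  then show ?case by simp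
qed

lemma P_deriv:
  assumes "real (Suc m) \<le> x" "x \<le> B"
  shows "(P (Suc m) has_real_derivative P m (x-1)/x) (at x within {real (Suc m)..B})"
proof -
  have c: "continuous_on {real (Suc m)..B} (\<lambda>t. P m (t - 1) / t)"
  proof (intro continuous_intros)
    have "continuous_on {real m..B-1} (P m)" by (rule P_cont)
    then show "continuous_on {real (Suc m)..B} (\<lambda>t. P m (t-1))"
      by (rule continuous_on_compose2) (auto intro: continuous_intros)
    show "\<forall>x\<in>{real (Suc m)..B}. x \<noteq> 0" by auto
  qed
  have e: "P (Suc m) = (\<lambda>u. integral {real (Suc m)..u} (\<lambda>t. P m (t - 1) / t))"
    by (rule ext) simp
  show ?thesis unfolding e has_real_derivative_iff_has_vector_derivative
    using integral_has_vector_derivative[OF c] assms by auto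
qed

lemma F_cont: "continuous_on {real m..B} (F m)"
proof (induction m arbitrary: B)
  case 0 then show ?case by (simp add: continuous_on_const)
next
  case (Suc m)
  have c: "continuous_on {real (Suc m)..B} (\<lambda>t. F m t / (t - real (Suc m) + 1))"
  proof (intro continuous_intros)
    show "continuous_on {real (Suc m)..B} (F m)"
      by (rule continuous_on_subset[OF Suc.IH]) auto
    show "\<forall>x\<in>{real (Suc m)..B}. x - real (Suc m) + 1 \<noteq> 0" by auto
  qed
  have "continuous_on {real (Suc m)..B} (\<lambda>u. integral {real (Suc m)..u} (\<lambda>t. F m t / (t - real (Suc m) + 1)))"
    by (rule indefinite_integral_continuous_1[OF integrable_continuous_interval[OF c]])
  then show ?case by simp
qed

lemma F_deriv:
  assumes "real (Suc m) \<le> x" "x \<le> B"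
  shows "(F (Suc m) has_real_derivative F m x / (x - real (Suc m) + 1)) (at x within {real (Suc m)..B})"
proof -
  have c: "continuous_on {real (Suc m)..B} (\<lambda>t. F m t / (t - real (Suc m) + 1))"
  proof (intro continuous_intros)
    show "continuous_on {real (Suc m)..B} (F m)"
      by (rule continuous_on_subset[OF F_cont]) auto
    show "\<forall>x\<in>{real (Suc m)..B}. x - real (Suc m) + 1 \<noteq> 0" by auto
  qed
  have e: "F (Suc m) = (\<lambda>u. integral {real (Suc m)..u} (\<lambda>t. F m t / (t - real (Suc m) + 1)))"
    by (rule ext) simp
  show ?thesis unfolding e has_real_derivative_iff_has_vector_derivative
    using integral_has_vector_derivative[OF c] assms by auto
qed

lemma Pterm_deriv:
  assumes "j < k" "t \<in> {real k..u}"
  shows "((\<lambda>t. P (k-j) (t - real j)) has_real_derivative P (k-j-1) (t - real j - 1)/(t - real j))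
           (at t within {real k..u})"
proof -
  obtain m where m: "k - j = Suc m" using assms(1) by (metis Suc_diff_Suc)
  have rk: "real (Suc m) = real k - real j" using m assms(1) by (metis of_nat_diff less_imp_le)
  have d1: "(P (Suc m) has_real_derivative P m (t - real j - 1)/(t - real j)) (at (t - real j) within {real (Suc m)..u - real j})"
    using P_deriv[of m "t - real j" "u - real j"] assms rk by auto
  have d2: "(P (Suc m) has_real_derivative P m (t - real j - 1)/(t - real j)) (at ((\<lambda>t. t - real j) t) within ((\<lambda>t. t - real j) ` {real k..u}))"
    using assms(2) rk by (intro DERIV_subset[OF d1]) auto
  have d3: "((\<lambda>t. t - real j) has_real_derivative 1) (at t within {real k..u})"
    by (auto intro!: derivative_eq_intros)
  have "(P (Suc m) \<circ> (\<lambda>t. t - real j) has_real_derivative P m (t - real j - 1)/(t - real j) * 1) (at t within {real k..u})"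
    by (rule DERIV_image_chain[OF d2 d3])
  then show ?thesis using m by (simp add: o_def)
qed

lemma Fterm_deriv:
  assumes "j < k" "t \<in> {real k..u}"
  shows "(F j has_real_derivative (if j = 0 then 0 else F (j-1) t / (t - real j + 1)))
           (at t within {real k..u})"
proof (cases j)
  case 0
  have "F 0 = (\<lambda>_. 1)" by (rule ext) simp
  then show ?thesis using 0 by (simp add: DERIV_const)
next
  case (Suc m)
  have "(F (Suc m) has_real_derivative F m t / (t - real (Suc m) + 1)) (at t within {real (Suc m)..u})"
    using F_deriv[of m t u] assms Suc by auto
  then have "(F (Suc m) has_real_derivative F m t / (t - real (Suc m) + 1)) (at t within {real k..u})"
    by (rule DERIV_subset) (use assms Suc in auto)
  then show ?thesis using Suc by simp
qed

lemma term_deriv: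
  assumes "j < k" "t \<in> {real k..u}"
  shows "((\<lambda>t. (-1)^(k-j-1) * P (k-j) (t - real j) * F j t) has_real_derivative
     (-1)^(k-j-1) * (P (k-j-1) (t - real j - 1)/(t - real j) * F j t)
        + (-1)^(k-j-1) * (P (k-j) (t - real j) * (if j = 0 then 0 else F (j-1) t / (t - real j + 1))))
           (at t within {real k..u})"
proof -
  have "((\<lambda>t. (-1)^(k-j-1) * (P (k-j) (t - real j) * F j t)) has_real_derivative
     (-1)^(k-j-1) * (P (k-j) (t - real j) * (if j = 0 then 0 else F (j-1) t / (t - real j + 1))
        + P (k-j-1) (t - real j - 1)/(t - real j) * F j t))
           (at t within {real k..u})"
    by (intro DERIV_cmult DERIV_mult' Pterm_deriv Fterm_deriv assms)
  then show ?thesis by (simp add: algebra_simps)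
qed

lemma G_deriv:
  fixes n :: nat
  assumes t: "t \<in> {real (Suc n)..u}"
  shows "((\<lambda>t. \<Sum>j<Suc n. (-1) ^ (Suc n - j - 1) * P (Suc n - j) (t - real j) * F j t)
     has_real_derivative F n t / (t - real (Suc n) + 1)) (at t within {real (Suc n)..u})"
proof -
  define A where "A j = (-1)^(n-j) * (P (n-j) (t - real j - 1)/(t - real j) * F j t)" for j
  define B where "B j = (-1)^(n-j) * (P (Suc n-j) (t - real j) * (if j = 0 then 0 else F (j-1) t / (t - real j + 1)))" for j
  have D: "((\<lambda>t. \<Sum>j<Suc n. (-1) ^ (Suc n - j - 1) * P (Suc n - j) (t - real j) * F j t)
     has_real_derivative (\<Sum>j<Suc n. A j + B j)) (at t within {real (Suc n)..u})"
    by (rule DERIV_sum, rule DERIV_cong[OF term_deriv[OF _ t]])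
       (simp_all only: A_def B_def Suc_diff_1 diff_Suc_1 lessThan_iff, simp)
  have AB: "A j + B (Suc j) = 0" if "j < n" for j
  proof -
    define d where "d = n - Suc j"
    have d: "n - j = Suc d" using Suc_diff_Suc[OF that] by (simp add: d_def)
    have d2: "n - Suc j = d" by (simp add: d_def)
    have d3: "Suc n - Suc j = Suc d" using d by simp
    have e1: "t - real (Suc j) = t - real j - 1" by simp
    have e2: "t - real (Suc j) + 1 = t - real j" by simp
    have a: "A j = (-1)^(Suc d) * (P (Suc d) (t - real j - 1)/(t - real j) * F j t)"
      unfolding A_def d by (rule refl)
    have b: "B (Suc j) = (-1)^d * (P (Suc d) (t - real j - 1) * (F j t / (t - real j)))"
      unfolding B_def d2 d3 e1 e2 by simp
    show ?thesis unfolding a b by (simp add: field_simps)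
  qed
  have s1: "(\<Sum>j<Suc n. B j) = (\<Sum>j<n. B (Suc j))"
    by (subst sum.lessThan_Suc_shift) (simp add: B_def)
  have s2: "(\<Sum>j<Suc n. A j) = (\<Sum>j<n. A j) + A n" by simp
  have s3: "(\<Sum>j<n. A j + B (Suc j)) = 0" using AB by (intro sum.neutral) simp
  have s4: "A n = F n t / (t - real (Suc n) + 1)" by (simp add: A_def)
  have "(\<Sum>j<Suc n. A j + B j) = (\<Sum>j<Suc n. A j) + (\<Sum>j<Suc n. B j)"
    by (rule sum.distrib)
  also have "\<dots> = (\<Sum>j<n. A j + B (Suc j)) + A n"
    unfolding s1 s2 sum.distrib by simp
  also have "\<dots> = F n t / (t - real (Suc n) + 1)" using s3 s4 by simp
  finally have E: "(\<Sum>j<Suc n. A j + B j) = F n t / (t - real (Suc n) + 1)" .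
  show ?thesis by (rule DERIV_cong[OF D E])
qed

lemma G_zero:
  fixes n :: nat
  shows "(\<Sum>j<Suc n. (-1) ^ (Suc n - j - 1) * P (Suc n - j) (real (Suc n) - real j) * F j (real (Suc n))) = 0"
proof (rule sum.neutral, rule ballI)
  fix j assume "j \<in> {..<Suc n}"
  then have jn: "j \<le> n" by simp
  define m where "m = n - j"
  have m: "Suc n - j = Suc m" using jn by (simp add: m_def Suc_diff_le)
  have r: "real (Suc n) - real j = real (Suc m)" using jn by (simp add: m_def of_nat_diff)
  have p: "P (Suc m) (real (Suc m)) = 0" by simp
  show "(-1) ^ (Suc n - j - 1) * P (Suc n - j) (real (Suc n) - real j) * F j (real (Suc n)) = 0"
    unfolding m r p by simp
qed

lemma main_Suc:
  fixes n :: nat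
  assumes u: "u \<ge> real (Suc n)"
  shows "F (Suc n) u = (\<Sum>j<Suc n. (-1) ^ (Suc n - j - 1) * P (Suc n - j) (u - real j) * F j u)"
proof -
  define G where "G t = (\<Sum>j<Suc n. (-1) ^ (Suc n - j - 1) * P (Suc n - j) (t - real j) * F j t)" for t
  define g where "g t = F n t / (t - real (Suc n) + 1)" for t
  have deriv: "(G has_vector_derivative g t) (at t within {real (Suc n)..u})"
    if t: "t \<in> {real (Suc n)..u}" for t
    unfolding has_real_derivative_iff_has_vector_derivative[symmetric] G_def g_def
    by (rule G_deriv[OF t])
  have I: "(g has_integral G u - G (real (Suc n))) {real (Suc n)..u}"
    by (rule fundamental_theorem_of_calculus[OF u deriv])
  have Z: "G (real (Suc n)) = 0" unfolding G_def by (rule G_zero)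
  have "F (Suc n) u = integral {real (Suc n)..u} g" unfolding g_def by (simp only: F.simps)
  also have "\<dots> = G u - G (real (Suc n))" by (rule integral_unique[OF I])
  also have "\<dots> = G u" unfolding Z by simp
  finally show ?thesis by (simp add: G_def)
qed

theorem mainTheorem11:
  fixes k :: nat and u :: real
  assumes "k \<ge> 2" and "u \<ge> real k"
  shows "F k u = (\<Sum>j<k. (-1) ^ (k - j - 1) * P (k - j) (u - real j) * F j u)"
proof -
  obtain n where "k = Suc n" using assms(1) by (cases k) auto
  then show ?thesis using main_Suc[of n u] assms by simp
qed

end
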